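(* Let $d\ge2$. Then $$\sum_{k\ge1}W(D_{n_k-1,d};q)z^k=z\,\frac{(d+1)q+\binom{d+1}{2}q^2(1+z)}{(1-z)(1-dz)(1-d^2q^2z)}.$$
   Context: For a connected graph $G$, $W(G;q)=\sum_{\{u,v\}}q^{d(u,v)}$ over unordered pairs of distinct vertices, $d$ the graph distance. The $d$-ary dendrimer $D_{n,d}$ is the tree on vertex set $\{1,\ldots,n\}$ defined inductively: $D_{1,d}$ is the single vertex $1$, and $D_{n,d}$ is obtained from $D_{n-1,d}$ by attaching a new leaf $n$ to the smallest-numbered vertex of $D_{n-1,d}$ having degree $\le d$. $n_k=2+(d+1)\frac{d^k-1}{d-1}$; thus $D_{n_k-1,d}$ is the complete dendrimer in which the root has $d+1$ children, every other non-leaf has $d$ children, and all leaves are at distance $k$ from the root. *)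

theory Defs
  imports Complex_Main "HOL-Computational_Algebra.Formal_Power_Series"
begin

(* Edge set of the d-ary dendrimer D_{n,d} on vertex set {1..n}; edges are 2-element sets.
   Vertex Suc(Suc n) is attached to the smallest vertex of D_{Suc n,d} of degree <= d. *)
fun dend_edges :: "nat \<Rightarrow> nat \<Rightarrow> nat set set" where
  "dend_edges d 0 = {}"
| "dend_edges d (Suc 0) = {}"
| "dend_edges d (Suc (Suc n)) =
     (let E = dend_edges d (Suc n)
      in insert {LEAST v. v \<in> {1..Suc n} \<and> card {e \<in> E. v \<in> e} \<le> d, Suc (Suc n)} E)"

definition is_walk :: "'a set set \<Rightarrow> 'a list \<Rightarrow> bool" where
  "is_walk E xs \<longleftrightarrow> xs \<noteq> [] \<and> (\<forall>i. Suc i < length xs \<longrightarrow> {xs ! i, xs ! Suc i} \<in> E)"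

definition gdist :: "'a set set \<Rightarrow> 'a \<Rightarrow> 'a \<Rightarrow> nat" where
  "gdist E u v = (LEAST k. \<exists>xs. is_walk E xs \<and> length xs = Suc k \<and> hd xs = u \<and> last xs = v)"

definition wiener_poly :: "'a set \<Rightarrow> 'a set set \<Rightarrow> real \<Rightarrow> real" where
  "wiener_poly V E q = (\<Sum>p \<in> {p. p \<subseteq> V \<and> card p = 2}.
       q ^ gdist E (SOME u. u \<in> p) (SOME v. v \<in> p \<and> v \<noteq> (SOME u. u \<in> p)))"

definition dend_W :: "nat \<Rightarrow> nat \<Rightarrow> real \<Rightarrow> real" where
  "dend_W d n q = wiener_poly {1..n} (dend_edges d n) q"

definition n_k :: "nat \<Rightarrow> nat \<Rightarrow> nat" where
  "n_k d k = 2 + (d + 1) * ((d ^ k - 1) div (d - 1))"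

end

theory Submission
  imports Defs
begin


definition cc :: "nat \<Rightarrow> nat \<Rightarrow> real" where
  "cc d k = (if k = 0 then real d + 1 else real d)"

primrec NS :: "nat \<Rightarrow> nat \<Rightarrow> real" where
  "NS d 0 = 1" | "NS d (Suc k) = cc d k * NS d k"
primrec RS :: "nat \<Rightarrow> real \<Rightarrow> nat \<Rightarrow> real" where
  "RS d q 0 = 1" | "RS d q (Suc k) = q^2 * (cc d k)^2 * RS d q k + (1 - q^2) * NS d (Suc k)"
primrec AS :: "nat \<Rightarrow> real \<Rightarrow> nat \<Rightarrow> real" where
  "AS d q 0 = 1" | "AS d q (Suc k) = q * cc d k * AS d q k + RS d q (Suc k)"
primrec FS :: "nat \<Rightarrow> real \<Rightarrow> nat \<Rightarrow> real" where
  "FS d q 0 = 1" | "FS d q (Suc k) = FS d q k + 2 * q * cc d k * AS d q k + RS d q (Suc k)"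
primrec MS :: "nat \<Rightarrow> nat \<Rightarrow> real" where
  "MS d 0 = 1" | "MS d (Suc k) = MS d k + NS d (Suc k)"

definition ws :: "nat \<Rightarrow> real \<Rightarrow> nat \<Rightarrow> real" where
  "ws d q k = (FS d q k - MS d k) / 2"

lemma NS_rec: "NS d (Suc (Suc k)) = real d * NS d (Suc k)"
  by (simp add: cc_def)
lemma RS_rec: "RS d q (Suc (Suc (Suc k))) - (q^2*d^2 + d) * RS d q (Suc (Suc k)) + q^2*d^2*d * RS d q (Suc k) = 0"
  by (simp add: cc_def algebra_simps)
lemma NS_rec2: fixes q :: real shows "NS d (Suc (Suc (Suc k))) - (q^2*d^2 + d) * NS d (Suc (Suc k)) + q^2*d^2*d * NS d (Suc k) = 0"
  by (simp add: cc_def algebra_simps)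

lemma AS_rec: "AS d q (Suc (Suc (Suc k))) - (q^2*d^2 + d) * AS d q (Suc (Suc k)) + q^2*d^2*d * AS d q (Suc k) = 0"
proof (induction k)
  case 0
  show ?case by (simp add: cc_def algebra_simps numeral_eq_Suc power2_eq_square)
next
  case (Suc k)
  have e: "AS d q (Suc (Suc (Suc (Suc k)))) - (q^2*d^2 + d) * AS d q (Suc (Suc (Suc k))) + q^2*d^2*d * AS d q (Suc (Suc k))
     = q * d * (AS d q (Suc (Suc (Suc k))) - (q^2*d^2 + d) * AS d q (Suc (Suc k)) + q^2*d^2*d * AS d q (Suc k))
       + (RS d q (Suc (Suc (Suc (Suc k)))) - (q^2*d^2 + d) * RS d q (Suc (Suc (Suc k))) + q^2*d^2*d * RS d q (Suc (Suc k)))"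
    by (simp only: AS.simps cc_def) (simp add: algebra_simps)
  show ?case unfolding e Suc RS_rec by simp
qed

lemma ws_rec: "ws d q (Suc (Suc (Suc (Suc k)))) - (1 + real d + q^2*d^2) * ws d q (Suc (Suc (Suc k)))
   + (real d + q^2*d^2 + q^2*d^2*d) * ws d q (Suc (Suc k)) - q^2*d^2*d * ws d q (Suc k) = 0"
proof -
  let ?c = "q^2*d^2"
  have ed: "\<And>j. ws d q (Suc (Suc j)) - ws d q (Suc j) = q * d * AS d q (Suc j) + (RS d q (Suc (Suc j)) - NS d (Suc (Suc j)))/2"
    by (simp add: ws_def cc_def field_simps)
  have "ws d q (Suc (Suc (Suc (Suc k)))) - (1 + real d + ?c) * ws d q (Suc (Suc (Suc k)))
   + (real d + ?c + ?c*d) * ws d q (Suc (Suc k)) - ?c*d * ws d q (Suc k)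
    = (ws d q (Suc (Suc (Suc (Suc k)))) - ws d q (Suc (Suc (Suc k))))
      - (?c + d) * (ws d q (Suc (Suc (Suc k))) - ws d q (Suc (Suc k)))
      + ?c * d * (ws d q (Suc (Suc k)) - ws d q (Suc k))" by (simp add: algebra_simps)
  also have "\<dots> = q * d * (AS d q (Suc (Suc (Suc k))) - (?c + d) * AS d q (Suc (Suc k)) + ?c*d * AS d q (Suc k))
     + (RS d q (Suc (Suc (Suc (Suc k)))) - (?c + d) * RS d q (Suc (Suc (Suc k))) + ?c*d * RS d q (Suc (Suc k)))/2
     - (NS d (Suc (Suc (Suc (Suc k)))) - (?c + d) * NS d (Suc (Suc (Suc k))) + ?c*d * NS d (Suc (Suc k)))/2"
    unfolding ed by (simp add: algebra_simps add_divide_distrib diff_divide_distrib)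
  also have "\<dots> = 0" using AS_rec[of d q k] RS_rec[of d q "Suc k"] NS_rec2[where d=d and q=q and k="Suc k"] by simp
  finally show ?thesis by simp
qed



unbundle fps_syntax

lemma mult_lin_nth: "(g * (1 - fps_const (a::real) * fps_X)) $ n = g $ n - (if n = 0 then 0 else a * g $ (n - 1))"
proof -
  have "g * (1 - fps_const a * fps_X) = g - fps_const a * (fps_X * g)" by (simp add: algebra_simps)
  thus ?thesis by simp
qed

lemma fps_main:
  fixes d :: nat and q :: real
  shows "Abs_fps (\<lambda>k. if k = 0 then 0 else ws d q k)
       = fps_X * (fps_const (real (d + 1) * q)
                  + fps_const (real ((d + 1) choose 2) * q ^ 2) * (1 + fps_X))
         / ((1 - fps_X) * (1 - fps_const (real d) * fps_X)
            * (1 - fps_const (real d ^ 2 * q ^ 2) * fps_X))"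
proof -
  define f where "f = Abs_fps (\<lambda>k. if k = 0 then 0 else ws d q k)"
  define D where "D = (1 - fps_X) * (1 - fps_const (real d) * fps_X)
            * (1 - fps_const (real d ^ 2 * q ^ 2) * fps_X)"
  define N where "N = fps_X * (fps_const (real (d + 1) * q)
                  + fps_const (real ((d + 1) choose 2) * q ^ 2) * (1 + fps_X))"
  have ch: "real ((d + 1) choose 2) = real (d+1) * real d / 2"
  proof -
    have ev: "even ((d+1)*d)" by simp
    have "(d + 1) choose 2 = (d+1)*d div 2" by (simp add: choose_two)
    then show ?thesis using ev by (simp add: real_of_nat_div algebra_simps)
  qed
  have N0: "N $ n = (if n = 1 then real (d+1) * q + real (d+1) * real d / 2 * q^2 else if n = 2 then real (d+1) * real d / 2 * q^2 else 0)" for n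
  proof -
    have "N = fps_X * fps_const (real (d + 1) * q + real ((d + 1) choose 2) * q ^ 2)
       + fps_X * (fps_X * fps_const (real ((d + 1) choose 2) * q ^ 2))"
      unfolding N_def by (simp add: algebra_simps flip: fps_const_add)
    then show ?thesis unfolding ch
      by (cases n) (auto simp: numeral_eq_Suc)
  qed
  have D0: "D $ 0 \<noteq> 0" unfolding D_def by simp
  have fD: "f * D = N"
  proof (rule fps_ext)
    fix n
    have 1: "1 - fps_X = 1 - fps_const (1::real) * fps_X" by simp
    have "(f * D) $ n = (f * (1 - fps_const 1 * fps_X) * (1 - fps_const (real d) * fps_X)
            * (1 - fps_const (real d ^ 2 * q ^ 2) * fps_X)) $ n"
      unfolding D_def 1 by (simp add: mult.assoc)
    also have "\<dots> = N $ n"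
    proof -
      consider "n = 0" | "n = 1" | "n = 2" | "n = 3" | m where "n = Suc (Suc (Suc (Suc m)))"
        by (metis One_nat_def Suc_1 numeral_3_eq_3 not0_implies_Suc)
      then show ?thesis
      proof cases
        case 1 then show ?thesis by (simp add: mult_lin_nth f_def N0)
      next
        case 2 then show ?thesis
          by (simp add: mult_lin_nth f_def N0 ws_def cc_def algebra_simps numeral_eq_Suc power2_eq_square)
      next
        case 3 then show ?thesis
          by (simp add: mult_lin_nth f_def N0 ws_def cc_def field_simps numeral_eq_Suc power2_eq_square)
      next
        case 4 then show ?thesis
          by (simp add: mult_lin_nth f_def N0 ws_def cc_def field_simps numeral_eq_Suc power2_eq_square)
      next
        case 5
        then show ?thesis using ws_rec[of d q m]
          by (simp add: mult_lin_nth f_def N0 algebra_simps power2_eq_square)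
      qed
    qed
    finally show "(f * D) $ n = N $ n" .
  qed
  have "N / D = f * D * inverse D" using D0 fD by (simp add: fps_divide_unit)
  also have "\<dots> = f" using D0 by (simp add: mult.assoc inverse_mult_eq_1')
  finally show ?thesis unfolding f_def N_def D_def by simp
qed




definition par :: "nat \<Rightarrow> nat \<Rightarrow> nat" where "par d w = (w - 3) div d + 1"

lemma par_ge1: "1 \<le> par d w" by (simp add: par_def)

lemma par_le: "1 \<le> w \<Longrightarrow> d \<ge> 2 \<Longrightarrow> par d w \<le> w"
proof -
  assume a: "1 \<le> w" "d \<ge> 2"
  have "(w - 3) div d \<le> w - 3" by simp
  then show ?thesis using a unfolding par_def by linarith
qed

lemma par_less: "2 \<le> w \<Longrightarrow> d \<ge> 2 \<Longrightarrow> par d w < w"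
proof -
  assume a: "2 \<le> w" "d \<ge> 2"
  have "(w - 3) div d \<le> w - 3" by simp
  then show ?thesis using a unfolding par_def by linarith
qed

lemma par_eq1: "d \<ge> 2 \<Longrightarrow> par d w = 1 \<longleftrightarrow> w < d + 3"
  unfolding par_def by (auto simp: div_eq_0_iff)

lemma par_ge: "d \<ge> 2 \<Longrightarrow> a \<ge> 2 \<Longrightarrow> a \<le> par d w \<longleftrightarrow> d * (a - 1) + 3 \<le> w"
proof -
  assume a: "d \<ge> 2" "a \<ge> 2"
  have "a \<le> par d w \<longleftrightarrow> a - 1 \<le> (w - 3) div d" unfolding par_def using a by auto
  also have "\<dots> \<longleftrightarrow> (a - 1) * d \<le> w - 3" using a by (simp add: less_eq_div_iff_mult_less_eq)
  also have "\<dots> \<longleftrightarrow> d * (a - 1) + 3 \<le> w"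
  proof -
    have "d * (a - 1) \<ge> 1" using a by simp
    then show ?thesis by (subst mult.commute) arith
  qed
  finally show ?thesis .
qed

lemma par_lt: "d \<ge> 2 \<Longrightarrow> b \<ge> 2 \<Longrightarrow> par d w < b \<longleftrightarrow> w < d * (b - 1) + 3"
proof -
  assume a: "d \<ge> 2" "b \<ge> 2"
  have "par d w < b \<longleftrightarrow> (w - 3) div d < b - 1" unfolding par_def using a by auto
  also have "\<dots> \<longleftrightarrow> w - 3 < (b - 1) * d" using a by (simp add: div_less_iff_less_mult)
  also have "\<dots> \<longleftrightarrow> w < d * (b - 1) + 3"
  proof -
    have "d * (b - 1) \<ge> 1" using a by simp
    then show ?thesis by (subst mult.commute) arith
  qed
  finally show ?thesis .
qed

lemma par_eq: "d \<ge> 2 \<Longrightarrow> x \<ge> 2 \<Longrightarrow> par d w = x \<longleftrightarrow> d * (x - 1) + 3 \<le> w \<and> w < d * x + 3"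
proof -
  assume a: "d \<ge> 2" "x \<ge> 2"
  have "par d w = x \<longleftrightarrow> x \<le> par d w \<and> par d w < x + 1" by auto
  also have "\<dots> \<longleftrightarrow> d * (x - 1) + 3 \<le> w \<and> w < d * x + 3"
    using par_ge[OF a] par_lt[OF a(1), of "x+1" w] a by simp
  finally show ?thesis .
qed

definition EE :: "nat \<Rightarrow> nat \<Rightarrow> nat set set" where
  "EE d n = (\<lambda>w. {w, par d w}) ` {2..n}"

lemma EE_inj: "d \<ge> 2 \<Longrightarrow> inj_on (\<lambda>w. {w, par d w}) {2..}"
proof (rule inj_onI)
  fix w w' assume a: "d \<ge> 2" "w \<in> {2..}" "w' \<in> {2..}" "{w, par d w} = {w', par d w'}"
  have "par d w < w" "par d w' < w'" using a par_less by auto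
  then show "w = w'" using a(4) by (auto simp: doubleton_eq_iff)
qed

lemma deg_EE:
  assumes "d \<ge> 2"
  shows "card {e \<in> EE d M. v \<in> e} = card {w \<in> {2..M}. w = v \<or> par d w = v}"
proof -
  have "{e \<in> EE d M. v \<in> e} = (\<lambda>w. {w, par d w}) ` {w \<in> {2..M}. w = v \<or> par d w = v}"
    unfolding EE_def by auto
  moreover have "inj_on (\<lambda>w. {w, par d w}) {w \<in> {2..M}. w = v \<or> par d w = v}"
    using EE_inj[OF assms] by (rule inj_on_subset) auto
  ultimately show ?thesis by (simp add: card_image)
qed

lemma least_par:
  assumes d: "d \<ge> 2" and M: "M \<ge> 1"
  shows "(LEAST v. v \<in> {1..M} \<and> card {e \<in> EE d M. v \<in> e} \<le> d) = par d (Suc M)"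
proof (rule Least_equality)
  define s where "s = par d (Suc M)"
  have s1: "1 \<le> s" unfolding s_def by (rule par_ge1)
  have sM: "s \<le> M" using par_less[OF _ d, of "Suc M"] M unfolding s_def by simp
  have "card {w \<in> {2..M}. w = s \<or> par d w = s} \<le> d"
  proof (cases "s = 1")
    case True
    then have "Suc M < d + 3" using par_eq1[OF d] unfolding s_def by simp
    have "{w \<in> {2..M}. w = s \<or> par d w = s} \<subseteq> {2..M}" by auto
    then have "card {w \<in> {2..M}. w = s \<or> par d w = s} \<le> card {2..M}" by (intro card_mono) auto
    then show ?thesis using \<open>Suc M < d + 3\<close> by simp
  next
    case False
    then have s2: "s \<ge> 2" using s1 by simp
    have pe: "par d w = s \<longleftrightarrow> d * (s - 1) + 3 \<le> w \<and> w < d * s + 3" for w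
      using par_eq[OF d s2] .
    have lo: "d * (s - 1) + 3 \<le> Suc M" and hi: "Suc M < d * s + 3"
      using pe[of "Suc M"] unfolding s_def by auto
    have "{w \<in> {2..M}. w = s \<or> par d w = s} \<subseteq> insert s {d * (s - 1) + 3..M}"
    proof
      fix w assume "w \<in> {w \<in> {2..M}. w = s \<or> par d w = s}"
      then show "w \<in> insert s {d * (s - 1) + 3..M}" using pe[of w] by auto
    qed
    then have "card {w \<in> {2..M}. w = s \<or> par d w = s} \<le> card (insert s {d * (s - 1) + 3..M})"
      by (intro card_mono) auto
    also have "\<dots> \<le> Suc (card {d * (s - 1) + 3..M})" by (rule card_insert_le_m1) auto
    also have "\<dots> \<le> d"
    proof -
      have "d * s = d * (s - 1) + d" using s2 by (cases s) auto
      then show ?thesis using lo hi by simp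
    qed
    finally show ?thesis .
  qed
  then show "par d (Suc M) \<in> {1..M} \<and> card {e \<in> EE d M. par d (Suc M) \<in> e} \<le> d"
    using s1 sM deg_EE[OF d] unfolding s_def by simp
next
  fix v assume v: "v \<in> {1..M} \<and> card {e \<in> EE d M. v \<in> e} \<le> d"
  show "par d (Suc M) \<le> v"
  proof (rule ccontr)
    assume "\<not> par d (Suc M) \<le> v"
    then have vs: "v < par d (Suc M)" by simp
    have "d + 1 \<le> card {w \<in> {2..M}. w = v \<or> par d w = v}"
    proof (cases "v = 1")
      case True
      then have "par d (Suc M) \<noteq> 1" using vs by simp
      then have dM: "d + 2 \<le> M" using par_eq1[OF d, of "Suc M"] by simp
      have "{2..d+2} \<subseteq> {w \<in> {2..M}. w = v \<or> par d w = v}"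
      proof
        fix w assume w: "w \<in> {2..d+2}"
        then have "par d w = 1" using par_eq1[OF d, of w] by simp
        then show "w \<in> {w \<in> {2..M}. w = v \<or> par d w = v}" using w dM True by simp
      qed
      then have "card {2..d+2} \<le> card {w \<in> {2..M}. w = v \<or> par d w = v}"
        by (intro card_mono) auto
      then show ?thesis by simp
    next
      case False
      then have v2: "v \<ge> 2" using v by auto
      have pe: "par d w = v \<longleftrightarrow> d * (v - 1) + 3 \<le> w \<and> w < d * v + 3" for w
        using par_eq[OF d v2] .
      have "v + 1 \<le> par d (Suc M)" using vs by simp
      then have dv: "d * v + 3 \<le> Suc M" using par_ge[OF d, of "v+1" "Suc M"] v2 by simp
      have nin: "v \<notin> {d * (v - 1) + 3..<d * v + 3}"
      proof -
        have "d * (v - 1) \<ge> v - 1" using d by simp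
        then show ?thesis by (simp only: atLeastLessThan_iff) linarith
      qed
      have "insert v {d * (v - 1) + 3..<d * v + 3} \<subseteq> {w \<in> {2..M}. w = v \<or> par d w = v}"
      proof
        fix w assume w: "w \<in> insert v {d * (v - 1) + 3..<d * v + 3}"
        show "w \<in> {w \<in> {2..M}. w = v \<or> par d w = v}"
        proof (cases "w = v")
          case True then show ?thesis using v v2 by simp
        next
          case False
          then have w1: "d * (v - 1) + 3 \<le> w" "w < d * v + 3" using w by auto
          then have "par d w = v" using pe[of w] by simp
          moreover have "w \<le> M" using w1 dv by simp
          moreover have "2 \<le> w" using w1 by simp
          ultimately show ?thesis by simp
        qed
      qed
      then have "card (insert v {d * (v - 1) + 3..<d * v + 3}) \<le> card {w \<in> {2..M}. w = v \<or> par d w = v}"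
        by (intro card_mono) auto
      moreover have "card (insert v {d * (v - 1) + 3..<d * v + 3}) = d + 1"
      proof -
        have "d * v = d * (v - 1) + d" using v2 by (cases v) auto
        then show ?thesis using nin by simp
      qed
      ultimately show ?thesis by simp
    qed
    then show False using v deg_EE[OF d] by simp
  qed
qed

lemma dend_edges_EE:
  assumes d: "d \<ge> 2"
  shows "dend_edges d n = EE d n"
proof (cases n)
  case 0 then show ?thesis by (simp add: EE_def)
next
  case (Suc m)
  have "dend_edges d (Suc m) = EE d (Suc m)"
  proof (induction m)
    case 0 then show ?case by (simp add: EE_def)
  next
    case (Suc m)
    have "dend_edges d (Suc (Suc m)) = insert {par d (Suc (Suc m)), Suc (Suc m)} (EE d (Suc m))"
      using Suc least_par[OF d, of "Suc m"] by (simp add: Let_def)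
    also have "\<dots> = EE d (Suc (Suc m))"
      unfolding EE_def by (auto simp: atLeastAtMostSuc_conv insert_commute)
    finally show ?case .
  qed
  then show ?thesis using Suc by simp
qed




definition dl :: "nat \<Rightarrow> nat \<Rightarrow> nat \<Rightarrow> nat" where
  "dl d u v = (LEAST s. \<exists>i j. s = i + j \<and> (par d ^^ i) u = (par d ^^ j) v)"

lemma funpow_Suc_right_app: "(f ^^ Suc i) x = (f ^^ i) (f x)"
  by (simp add: funpow_swap1)

lemma reach_root: assumes d: "d \<ge> 2" shows "\<exists>i. (par d ^^ i) u = 1"
proof (induction u rule: less_induct)
  case (less u)
  show ?case
  proof (cases "u \<ge> 2")
    case True
    then have "par d u < u" using par_less d by auto
    then obtain i where "(par d ^^ i) (par d u) = 1" using less by blast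
    then have "(par d ^^ Suc i) u = 1" by (simp only: funpow_Suc_right_app)
    then show ?thesis by blast
  next
    case False
    then consider "u = 0" | "u = 1" by linarith
    then show ?thesis
    proof cases
      case 1
      then have "(par d ^^ 1) u = 1" by (simp add: par_def)
      then show ?thesis by blast
    next
      case 2 then have "(par d ^^ 0) u = 1" by simp
      then show ?thesis by blast
    qed
  qed
qed

lemma dl_ex: assumes d: "d \<ge> 2"
  shows "\<exists>i j. dl d u v = i + j \<and> (par d ^^ i) u = (par d ^^ j) v"
proof -
  obtain i j where "(par d ^^ i) u = 1" "(par d ^^ j) v = 1" using reach_root[OF d] by metis
  then have "\<exists>s i j. s = i + j \<and> (par d ^^ i) u = (par d ^^ j) v" by metis
  then show ?thesis unfolding dl_def by (rule LeastI_ex)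
qed

lemma dl_le: "(par d ^^ i) u = (par d ^^ j) v \<Longrightarrow> dl d u v \<le> i + j" for d i u j v
  unfolding dl_def by (rule Least_le) auto

lemma dl_self: "dl d u u = 0"
  using dl_le[where d=d and i=0 and u=u and j=0 and v=u] by simp

lemma dl_sym: assumes d: "d \<ge> 2" shows "dl d u v = dl d v u"
proof -
  have "dl d u v \<le> dl d v u" if dd: "d \<ge> 2" for u v
  proof -
    obtain i j where "dl d v u = i + j" "(par d ^^ i) v = (par d ^^ j) u" using dl_ex[OF dd] by blast
    then show ?thesis using dl_le[where d=d and i=j and u=u and j=i and v=v] by simp
  qed
  then show ?thesis using d by (simp add: le_antisym)
qed

lemma dl_zero: assumes d: "d \<ge> 2" and "dl d u v = 0" shows "u = v"
  using dl_ex[OF d, of u v] assms by auto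

lemma lip1: assumes d: "d \<ge> 2" shows "dl d w v \<le> dl d (par d w) v + 1"
proof -
  obtain i j where "dl d (par d w) v = i + j" "(par d ^^ i) (par d w) = (par d ^^ j) v" using dl_ex[OF d] by blast
  then show ?thesis using dl_le[where d=d and i="Suc i" and u=w and j=j and v=v] by (simp only: funpow_Suc_right_app) simp
qed

lemma lip2: assumes d: "d \<ge> 2" shows "dl d (par d w) v \<le> dl d w v + 1"
proof -
  obtain i j where ij: "dl d w v = i + j" "(par d ^^ i) w = (par d ^^ j) v" using dl_ex[OF d] by blast
  show ?thesis
  proof (cases i)
    case 0
    then have "(par d ^^ 0) (par d w) = (par d ^^ Suc j) v" using ij by simp
    then show ?thesis using dl_le[where d=d and i=0 and u="par d w" and j="Suc j" and v=v] ij 0 by simp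
  next
    case (Suc i')
    then have "(par d ^^ i') (par d w) = (par d ^^ j) v" using ij by (simp only: funpow_Suc_right_app)
    then show ?thesis using dl_le[where d=d and i=i' and u="par d w" and j=j and v=v] ij Suc by simp
  qed
qed

lemma dl_up: assumes d: "d \<ge> 2" and na: "\<forall>j. (par d ^^ j) v \<noteq> u"
  shows "dl d u v = dl d (par d u) v + 1"
proof -
  obtain i j where ij: "dl d u v = i + j" "(par d ^^ i) u = (par d ^^ j) v" using dl_ex[OF d] by blast
  then obtain i' where i': "i = Suc i'" using na by (cases i) auto
  then have "(par d ^^ i') (par d u) = (par d ^^ j) v" using ij by (simp only: funpow_Suc_right_app)
  then have "dl d (par d u) v \<le> i' + j" by (rule dl_le)
  then show ?thesis using lip1[OF d, of u v] ij i' by simp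
qed

lemma dl_up2: assumes d: "d \<ge> 2" and na: "\<forall>j. (par d ^^ j) v \<noteq> u" and nb: "\<forall>j. (par d ^^ j) u \<noteq> v"
  shows "dl d u v = dl d (par d u) (par d v) + 2"
proof -
  obtain i j where ij: "dl d u v = i + j" "(par d ^^ i) u = (par d ^^ j) v" using dl_ex[OF d] by blast
  then obtain i' where i': "i = Suc i'" using na by (cases i) auto
  obtain j' where j': "j = Suc j'" using ij nb by (cases j) auto
  have "(par d ^^ i') (par d u) = (par d ^^ j') (par d v)" using ij i' j' by (simp only: funpow_Suc_right_app)
  then have le1: "dl d (par d u) (par d v) \<le> i' + j'" by (rule dl_le)
  obtain a b where ab: "dl d (par d u) (par d v) = a + b" "(par d ^^ a) (par d u) = (par d ^^ b) (par d v)"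
    using dl_ex[OF d] by blast
  then have "(par d ^^ Suc a) u = (par d ^^ Suc b) v" by (simp only: funpow_Suc_right_app)
  then have "dl d u v \<le> Suc a + Suc b" by (rule dl_le)
  then show ?thesis using le1 ij i' j' ab by simp
qed

lemma anc_le: assumes d: "d \<ge> 2" and "1 \<le> u" shows "(par d ^^ j) u \<le> u \<and> 1 \<le> (par d ^^ j) u"
proof (induction j)
  case 0 then show ?case using assms by simp
next
  case (Suc j)
  then show ?case using par_le[OF _ d, of "(par d ^^ j) u"] par_ge1[of d] by simp
qed

lemma EE_edge: "e \<in> EE d n \<Longrightarrow> \<exists>w. 2 \<le> w \<and> w \<le> n \<and> e = {w, par d w}"
  unfolding EE_def by auto

lemma walk_tl: "is_walk E (x # y # xs) \<Longrightarrow> is_walk E (y # xs) \<and> {x, y} \<in> E"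
  unfolding is_walk_def
proof (intro conjI allI impI)
  assume a: "x # y # xs \<noteq> [] \<and> (\<forall>i. Suc i < length (x # y # xs) \<longrightarrow> {(x # y # xs) ! i, (x # y # xs) ! Suc i} \<in> E)"
  show "y # xs \<noteq> []" by simp
  fix i assume "Suc i < length (y # xs)"
  then show "{(y # xs) ! i, (y # xs) ! Suc i} \<in> E" using a[THEN conjunct2, rule_format, of "Suc i"] by simp
next
  assume a: "x # y # xs \<noteq> [] \<and> (\<forall>i. Suc i < length (x # y # xs) \<longrightarrow> {(x # y # xs) ! i, (x # y # xs) ! Suc i} \<in> E)"
  show "{x, y} \<in> E" using a[THEN conjunct2, rule_format, of 0] by simp
qed

lemma walk_cons: "is_walk E (y # xs) \<Longrightarrow> {x, y} \<in> E \<Longrightarrow> is_walk E (x # y # xs)"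
  unfolding is_walk_def
proof (intro conjI allI impI)
  fix i
  assume a: "y # xs \<noteq> [] \<and> (\<forall>i. Suc i < length (y # xs) \<longrightarrow> {(y # xs) ! i, (y # xs) ! Suc i} \<in> E)"
    and e: "{x, y} \<in> E" and i: "Suc i < length (x # y # xs)"
  show "{(x # y # xs) ! i, (x # y # xs) ! Suc i} \<in> E"
  proof (cases i)
    case 0 then show ?thesis using e by simp
  next
    case (Suc i') then show ?thesis using a i by simp
  qed
qed simp

lemma walk_lower:
  assumes d: "d \<ge> 2"
  shows "is_walk (EE d n) xs \<Longrightarrow> dl d (hd xs) (last xs) \<le> length xs - 1"
proof (induction xs)
  case Nil then show ?case by (simp add: is_walk_def)
next
  case (Cons x xs)
  show ?case
  proof (cases xs)
    case Nil then show ?thesis by (simp add: dl_self)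
  next
    case (Cons y ys)
    have w: "is_walk (EE d n) (y # ys)" "{x, y} \<in> EE d n" using walk_tl[of "EE d n" x y ys] Cons.prems Cons by auto
    have ih: "dl d y (last xs) \<le> length xs - 1" using Cons.IH w Cons by simp
    obtain w where "{x, y} = {w, par d w}" using EE_edge[OF w(2)] by blast
    then have "dl d x (last xs) \<le> dl d y (last xs) + 1"
      using lip1[OF d, of w "last xs"] lip2[OF d, of w "last xs"] by (auto simp: doubleton_eq_iff)
    then show ?thesis using ih Cons by simp
  qed
qed

lemma neighbor:
  assumes d: "d \<ge> 2" and u: "u \<in> {1..n}" and v: "v \<in> {1..n}" and k: "dl d u v = Suc k"
  shows "\<exists>w \<in> {1..n}. {u, w} \<in> EE d n \<and> dl d w v = k"
proof -
  obtain i j where ij: "dl d u v = i + j" "(par d ^^ i) u = (par d ^^ j) v" using dl_ex[OF d] by blast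
  show ?thesis
  proof (cases i)
    case (Suc i')
    have u2: "u \<ge> 2"
    proof (rule ccontr)
      assume "\<not> u \<ge> 2"
      then have "u = 1" using u by simp
      then have "(par d ^^ i) u = 1" using anc_le[OF d, of u i] by simp
      then have "(par d ^^ 0) u = (par d ^^ j) v" using ij \<open>u = 1\<close> by simp
      then have "dl d u v \<le> j" using dl_le by fastforce
      then show False using ij Suc by simp
    qed
    have "(par d ^^ i') (par d u) = (par d ^^ j) v" using ij Suc by (simp only: funpow_Suc_right_app)
    then have "dl d (par d u) v \<le> k" using dl_le[where d=d and i=i' and u="par d u" and j=j and v=v] ij Suc k by simp
    moreover have "dl d u v \<le> dl d (par d u) v + 1" by (rule lip1[OF d])
    ultimately have "dl d (par d u) v = k" using k by simp
    moreover have "{u, par d u} \<in> EE d n" using u u2 unfolding EE_def by auto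
    moreover have "par d u \<in> {1..n}" using par_le[OF _ d, of u] par_ge1[of d u] u by auto
    ultimately show ?thesis by blast
  next
    case 0
    then obtain j' where j': "j = Suc j'" using ij k by (cases j) auto
    define w where "w = (par d ^^ j') v"
    have pw: "par d w = u" using ij 0 j' unfolding w_def by simp
    have wb: "w \<le> v \<and> 1 \<le> w" using anc_le[OF d, of v j'] v unfolding w_def by simp
    have w2: "w \<ge> 2"
    proof (rule ccontr)
      assume "\<not> w \<ge> 2"
      then have "w = 1" using wb by simp
      then have "u = 1" using pw by (simp add: par_def)
      then have "(par d ^^ 0) u = (par d ^^ j') v" using \<open>w = 1\<close> unfolding w_def by simp
      then have "dl d u v \<le> j'" using dl_le by fastforce
      then show False using ij 0 j' by simp
    qed
    have "dl d w v \<le> j'" using dl_le[where d=d and i=0 and u=w and j=j' and v=v] unfolding w_def by simp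
    moreover have "dl d u v \<le> dl d w v + 1" using lip2[OF d, of w v] pw by simp
    ultimately have "dl d w v = k" using k ij 0 j' by simp
    moreover have "{u, w} \<in> EE d n" using w2 wb v pw unfolding EE_def by (auto simp: insert_commute)
    moreover have "w \<in> {1..n}" using wb v by auto
    ultimately show ?thesis by blast
  qed
qed

lemma walk_upper:
  assumes d: "d \<ge> 2" and v: "v \<in> {1..n}"
  shows "u \<in> {1..n} \<Longrightarrow> dl d u v = k \<Longrightarrow> \<exists>xs. is_walk (EE d n) xs \<and> length xs = Suc k \<and> hd xs = u \<and> last xs = v"
proof (induction k arbitrary: u)
  case 0
  then have "u = v" using dl_zero[OF d] by blast
  then show ?case by (intro exI[of _ "[u]"]) (simp add: is_walk_def)
next
  case (Suc k)
  obtain w where w: "w \<in> {1..n}" "{u, w} \<in> EE d n" "dl d w v = k" using neighbor[OF d Suc.prems(1) v Suc.prems(2)] by blast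
  obtain xs where xs: "is_walk (EE d n) xs" "length xs = Suc k" "hd xs = w" "last xs = v" using Suc.IH[OF w(1) w(3)] by blast
  then obtain ys where ys: "xs = w # ys" by (cases xs) auto
  have "is_walk (EE d n) (u # xs)" using walk_cons[of "EE d n" w ys u] xs ys w by simp
  then show ?case using xs ys by (intro exI[of _ "u # xs"]) simp
qed

lemma gdist_dl:
  assumes d: "d \<ge> 2" and u: "u \<in> {1..n}" and v: "v \<in> {1..n}"
  shows "gdist (EE d n) u v = dl d u v"
  unfolding gdist_def
proof (rule Least_equality)
  show "\<exists>xs. is_walk (EE d n) xs \<and> length xs = Suc (dl d u v) \<and> hd xs = u \<and> last xs = v"
    using walk_upper[OF d v u] by blast
next
  fix k assume "\<exists>xs. is_walk (EE d n) xs \<and> length xs = Suc k \<and> hd xs = u \<and> last xs = v"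
  then obtain xs where "is_walk (EE d n) xs" "length xs = Suc k" "hd xs = u" "last xs = v" by blast
  then show "dl d u v \<le> k" using walk_lower[OF d] by fastforce
qed




lemma wiener_EE:
  assumes d: "d \<ge> 2"
  shows "wiener_poly {1..n} (EE d n) q = ((\<Sum>v\<in>{1..n}. \<Sum>u\<in>{1..n}. q ^ dl d u v) - real (card {1..n})) / 2"
proof -
  define V where "V = {1..n}"
  define g where "g = (\<lambda>(u, v). q ^ dl d u v)"
  define P where "P = {(u, v). u \<in> V \<and> v \<in> V \<and> u < v}"
  define S2 where "S2 = {p. p \<subseteq> V \<and> card p = 2}"
  define h where "h = (\<lambda>p. q ^ gdist (EE d n) (SOME u. u \<in> p) (SOME v. v \<in> p \<and> v \<noteq> (SOME u. u \<in> p)))"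
  have gsym: "g (u, v) = g (v, u)" for u v unfolding g_def using dl_sym[OF d] by simp
  have bij: "bij_betw (\<lambda>(u, v). {u, v}) P S2"
  proof (rule bij_betw_imageI)
    show "inj_on (\<lambda>(u, v). {u, v}) P"
      unfolding P_def by (rule inj_onI) (auto simp: doubleton_eq_iff)
    show "(\<lambda>(u, v). {u, v}) ` P = S2"
    proof
      show "(\<lambda>(u, v). {u, v}) ` P \<subseteq> S2" unfolding P_def S2_def by auto
      show "S2 \<subseteq> (\<lambda>(u, v). {u, v}) ` P"
      proof
        fix p assume "p \<in> S2"
        then obtain a b where ab: "p = {a, b}" "a \<noteq> b" "a \<in> V" "b \<in> V" unfolding S2_def by (auto simp: card_2_iff)
        show "p \<in> (\<lambda>(u, v). {u, v}) ` P"
        proof (cases "a < b")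
          case True then show ?thesis using ab unfolding P_def by (auto intro!: image_eqI[of _ _ "(a, b)"])
        next
          case False then have "b < a" using ab by simp
          then show ?thesis using ab unfolding P_def by (auto intro!: image_eqI[of _ _ "(b, a)"])
        qed
      qed
    qed
  qed
  have hP: "h {u, v} = g (u, v)" if "(u, v) \<in> P" for u v
  proof -
    define x where "x = (SOME x. x \<in> {u, v})"
    have x: "x \<in> {u, v}" unfolding x_def by (rule someI[of _ u]) simp
    define y where "y = (SOME y. y \<in> {u, v} \<and> y \<noteq> x)"
    have "\<exists>y. y \<in> {u, v} \<and> y \<noteq> x" using that x unfolding P_def by auto
    then have y: "y \<in> {u, v} \<and> y \<noteq> x" unfolding y_def by (rule someI_ex)
    have xy: "(x = u \<and> y = v) \<or> (x = v \<and> y = u)" using x y by auto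
    have V: "u \<in> {1..n}" "v \<in> {1..n}" using that unfolding P_def V_def by auto
    have "h {u, v} = q ^ gdist (EE d n) x y" unfolding h_def x_def y_def by simp
    also have "\<dots> = q ^ dl d x y" using xy V gdist_dl[OF d] by auto
    also have "\<dots> = g (u, v)" using xy gsym unfolding g_def by auto
    finally show ?thesis .
  qed
  have W: "wiener_poly V (EE d n) q = sum g P"
  proof -
    have "wiener_poly V (EE d n) q = sum h S2" unfolding wiener_poly_def h_def S2_def by simp
    also have "\<dots> = sum (h \<circ> (\<lambda>(u, v). {u, v})) P" using sum.reindex_bij_betw[OF bij, of h] by simp
    also have "\<dots> = sum g P" by (rule sum.cong) (auto simp: hP)
    finally show ?thesis .
  qed
  have fV: "finite V" unfolding V_def by simp
  have fP2: "finite P"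
    by (rule finite_subset[of _ "V \<times> V"]) (auto simp: P_def fV)
  have split: "V \<times> V = (P \<union> prod.swap ` P) \<union> (\<lambda>u. (u, u)) ` V" unfolding P_def
    by (auto simp: image_iff)
  have "(\<Sum>v\<in>V. \<Sum>u\<in>V. q ^ dl d u v) = (\<Sum>(v, u)\<in>V \<times> V. g (u, v))"
    unfolding g_def by (simp add: sum.cartesian_product)
  also have "\<dots> = (\<Sum>x\<in>V \<times> V. g x)" by (rule sum.cong) (auto simp: gsym)
  also have "\<dots> = (\<Sum>x\<in>P \<union> prod.swap ` P. g x) + (\<Sum>x\<in>(\<lambda>u. (u, u)) ` V. g x)"
    unfolding split using fP2 fV by (intro sum.union_disjoint) (auto simp: P_def)
  also have "(\<Sum>x\<in>P \<union> prod.swap ` P. g x) = sum g P + sum g (prod.swap ` P)"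
    using fP2 by (intro sum.union_disjoint) (auto simp: P_def)
  also have "sum g (prod.swap ` P) = sum g P"
    by (subst sum.reindex) (auto simp: gsym intro: sum.cong)
  also have "(\<Sum>x\<in>(\<lambda>u. (u, u)) ` V. g x) = real (card V)"
    by (subst sum.reindex) (auto simp: inj_on_def g_def dl_self)
  finally show ?thesis using W unfolding V_def by simp
qed




primrec mm :: "nat \<Rightarrow> nat \<Rightarrow> nat" where
  "mm d 0 = 2" | "mm d (Suc k) = d * (mm d k - 1) + 3"

primrec gg :: "nat \<Rightarrow> nat \<Rightarrow> nat" where
  "gg d 0 = 0" | "gg d (Suc k) = d * gg d k + 1"

definition LL :: "nat \<Rightarrow> nat \<Rightarrow> nat set" where
  "LL d k = (if k = 0 then {1} else {mm d (k - 1)..<mm d k})"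

definition TT :: "nat \<Rightarrow> nat \<Rightarrow> nat set" where
  "TT d k = {1..<mm d k}"

lemma mm_gg: "mm d k = 2 + (d + 1) * gg d k"
  by (induction k) (simp_all add: algebra_simps)

lemma gg_div: assumes d: "d \<ge> 2" shows "gg d k = (d ^ k - 1) div (d - 1)"
proof -
  have "(d - 1) * gg d k = d ^ k - 1"
  proof (induction k)
    case 0 then show ?case by simp
  next
    case (Suc k)
    have p: "d ^ k \<ge> 1" using d by simp
    have "(d - 1) * gg d (Suc k) = d * ((d - 1) * gg d k) + (d - 1)" by (simp add: algebra_simps)
    also have "\<dots> = d * (d ^ k - 1) + (d - 1)" using Suc by simp
    also have "\<dots> = d ^ Suc k - 1" using p d by (simp add: algebra_simps diff_mult_distrib2)
    finally show ?case .
  qed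
  moreover have pos: "d - 1 > 0" using d by simp
  ultimately show ?thesis by (metis nonzero_mult_div_cancel_left less_numeral_extra(3))
qed

lemma n_k_mm: assumes d: "d \<ge> 2" shows "n_k d k = mm d k"
  unfolding n_k_def mm_gg gg_div[OF d] ..

lemma mm_ge2: assumes d: "d \<ge> 2" shows "mm d k \<ge> 2"
  by (induction k) (use d in auto)

lemma mm_less: assumes d: "d \<ge> 2" shows "mm d k < mm d (Suc k)"
proof -
  have "mm d k - 1 \<le> d * (mm d k - 1)" using d by simp
  then show ?thesis using mm_ge2[OF d, of k] unfolding mm.simps by linarith
qed

lemma LL_Suc_iff: assumes d: "d \<ge> 2"
  shows "v \<in> LL d (Suc k) \<longleftrightarrow> 2 \<le> v \<and> par d v \<in> LL d k"
proof (cases k)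
  case 0
  then show ?thesis using par_eq1[OF d, of v] by (auto simp: LL_def)
next
  case (Suc j)
  have a: "mm d j \<ge> 2" "mm d (Suc j) \<ge> 2" using mm_ge2[OF d] by auto
  have "par d v \<in> LL d k \<longleftrightarrow> mm d j \<le> par d v \<and> par d v < mm d (Suc j)" using Suc by (simp add: LL_def)
  also have "\<dots> \<longleftrightarrow> mm d (Suc j) \<le> v \<and> v < mm d (Suc (Suc j))"
    using par_ge[OF d a(1), of v] par_lt[OF d a(2), of v] by simp
  finally show ?thesis using Suc a by (auto simp: LL_def)
qed

lemma TT_Suc: assumes d: "d \<ge> 2" shows "TT d (Suc k) = TT d k \<union> LL d (Suc k)"
  using mm_less[OF d, of k] mm_ge2[OF d, of k] by (auto simp: TT_def LL_def)

lemma TT_LL_disj: "TT d k \<inter> LL d (Suc k) = {}"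
  by (auto simp: TT_def LL_def)

lemma LL_sub_TT: assumes d: "d \<ge> 2" shows "LL d k \<subseteq> TT d k"
proof (cases k)
  case 0 then show ?thesis using mm_ge2[OF d, of 0] by (auto simp: TT_def LL_def)
next
  case (Suc j) then show ?thesis using TT_Suc[OF d, of j] by auto
qed

lemma TT_anc: assumes d: "d \<ge> 2" and u: "u \<in> TT d k" shows "(par d ^^ j) u \<in> TT d k"
  using anc_le[OF d, of u j] u by (auto simp: TT_def)

lemma fiber_card: assumes d: "d \<ge> 2" and x: "x \<in> LL d k"
  shows "card {v \<in> LL d (Suc k). par d v = x} = (if k = 0 then d + 1 else d)"
proof (cases k)
  case 0
  then have "x = 1" using x by (simp add: LL_def)
  have "v \<in> LL d (Suc k) \<and> par d v = x \<longleftrightarrow> v \<in> {2..<d+3}" for v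
  proof -
    have "v \<in> LL d (Suc k) \<and> par d v = x \<longleftrightarrow> 2 \<le> v \<and> par d v = 1"
      using LL_Suc_iff[OF d, of v k] 0 \<open>x = 1\<close> by (auto simp: LL_def)
    also have "\<dots> \<longleftrightarrow> v \<in> {2..<d+3}" using par_eq1[OF d, of v] by auto
    finally show ?thesis .
  qed
  then have "{v \<in> LL d (Suc k). par d v = x} = {2..<d+3}" by blast
  then show ?thesis using 0 by simp
next
  case (Suc j)
  then have x2: "x \<ge> 2" using x mm_ge2[OF d, of j] by (simp add: LL_def)
  have "{v \<in> LL d (Suc k). par d v = x} = {d * (x - 1) + 3..<d * x + 3}"
  proof -
    have "v \<in> LL d (Suc k) \<and> par d v = x \<longleftrightarrow> d * (x - 1) + 3 \<le> v \<and> v < d * x + 3" for v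
    proof -
      have "v \<in> LL d (Suc k) \<and> par d v = x \<longleftrightarrow> 2 \<le> v \<and> par d v = x" using LL_Suc_iff[OF d, of v k] x by auto
      also have "\<dots> \<longleftrightarrow> d * (x - 1) + 3 \<le> v \<and> v < d * x + 3" using par_eq[OF d x2, of v] by auto
      finally show ?thesis .
    qed
    then show ?thesis by (intro set_eqI) simp
  qed
  moreover have "d * x = d * (x - 1) + d" using x2 by (cases x) auto
  ultimately show ?thesis using Suc by simp
qed

lemma sum_par: assumes d: "d \<ge> 2"
  shows "(\<Sum>v\<in>LL d (Suc k). g (par d v)) = cc d k * (\<Sum>x\<in>LL d k. (g x :: real))"
proof -
  have fin: "finite (LL d k)" "finite (LL d (Suc k))" by (auto simp: LL_def)
  have img: "par d ` LL d (Suc k) \<subseteq> LL d k" using LL_Suc_iff[OF d] by auto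
  have "(\<Sum>v\<in>LL d (Suc k). g (par d v)) = (\<Sum>x\<in>LL d k. \<Sum>v\<in>{v \<in> LL d (Suc k). par d v = x}. g (par d v))"
    using sum.group[OF fin(2) fin(1) img, of "\<lambda>v. g (par d v)"] by simp
  also have "\<dots> = (\<Sum>x\<in>LL d k. cc d k * g x)"
  proof (rule sum.cong)
    fix x assume x: "x \<in> LL d k"
    have "(\<Sum>v\<in>{v \<in> LL d (Suc k). par d v = x}. g (par d v)) = (\<Sum>v\<in>{v \<in> LL d (Suc k). par d v = x}. g x)"
      by (rule sum.cong) auto
    also have "\<dots> = real (card {v \<in> LL d (Suc k). par d v = x}) * g x" by simp
    also have "\<dots> = cc d k * g x" using fiber_card[OF d x] by (simp add: cc_def)
    finally show "(\<Sum>v\<in>{v \<in> LL d (Suc k). par d v = x}. g (par d v)) = cc d k * g x" .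
  qed simp
  finally show ?thesis by (simp add: sum_distrib_left)
qed




definition RR :: "nat \<Rightarrow> real \<Rightarrow> nat \<Rightarrow> real" where
  "RR d q k = (\<Sum>v\<in>LL d k. \<Sum>u\<in>LL d k. q ^ dl d u v)"
definition AR :: "nat \<Rightarrow> real \<Rightarrow> nat \<Rightarrow> real" where
  "AR d q k = (\<Sum>v\<in>LL d k. \<Sum>u\<in>TT d k. q ^ dl d u v)"
definition FR :: "nat \<Rightarrow> real \<Rightarrow> nat \<Rightarrow> real" where
  "FR d q k = (\<Sum>v\<in>TT d k. \<Sum>u\<in>TT d k. q ^ dl d u v)"

lemma fin_LL: "finite (LL d k)" by (simp add: LL_def)
lemma fin_TT: "finite (TT d k)" by (simp add: TT_def)

lemma LL0: "LL d 0 = {1}" by (simp add: LL_def)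
lemma TT0: "TT d 0 = {1}" by (auto simp: TT_def)

lemma card_LL: assumes d: "d \<ge> 2" shows "real (card (LL d k)) = NS d k"
proof (induction k)
  case 0 then show ?case by (simp add: LL0)
next
  case (Suc k)
  have "real (card (LL d (Suc k))) = (\<Sum>v\<in>LL d (Suc k). (\<lambda>_. 1::real) (par d v))" by simp
  also have "\<dots> = cc d k * (\<Sum>x\<in>LL d k. 1)" by (rule sum_par[OF d])
  finally show ?case using Suc by simp
qed

lemma card_TT: assumes d: "d \<ge> 2" shows "real (card (TT d k)) = MS d k"
proof (induction k)
  case 0 then show ?case by (simp add: TT0)
next
  case (Suc k)
  have "card (TT d (Suc k)) = card (TT d k) + card (LL d (Suc k))"
    unfolding TT_Suc[OF d] by (rule card_Un_disjoint) (auto simp: fin_LL fin_TT TT_LL_disj)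
  then show ?case using Suc card_LL[OF d, of "Suc k"] by simp
qed

lemma not_in_TT: assumes "v \<in> LL d (Suc k)" shows "v \<notin> TT d k"
  using assms TT_LL_disj by blast

lemma P1: assumes d: "d \<ge> 2" and u: "u \<in> TT d k" and v: "v \<in> LL d (Suc k)"
  shows "dl d u v = dl d u (par d v) + 1"
proof -
  have "\<forall>j. (par d ^^ j) u \<noteq> v" using TT_anc[OF d u] not_in_TT[OF v] by metis
  then have "dl d v u = dl d (par d v) u + 1" by (rule dl_up[OF d])
  then show ?thesis using dl_sym[OF d] by metis
qed

lemma P2: assumes d: "d \<ge> 2" and u: "u \<in> LL d (Suc k)" and v: "v \<in> LL d (Suc k)" and ne: "u \<noteq> v"
  shows "dl d u v = dl d (par d u) (par d v) + 2"
proof -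
  have anc: "(par d ^^ j) b \<noteq> a" if a: "a \<in> LL d (Suc k)" and b: "b \<in> LL d (Suc k)" and "a \<noteq> b" for a b j
  proof (cases j)
    case 0 then show ?thesis using that by simp
  next
    case (Suc j')
    have "par d b \<in> TT d k" using b LL_Suc_iff[OF d] LL_sub_TT[OF d] by blast
    then have "(par d ^^ j') (par d b) \<in> TT d k" by (rule TT_anc[OF d])
    then have "(par d ^^ j) b \<in> TT d k" using Suc by (simp only: funpow_Suc_right_app)
    then show ?thesis using not_in_TT[OF a] by metis
  qed
  show ?thesis
    by (rule dl_up2[OF d]) (use anc u v ne in auto)
qed

lemma RR_Suc: assumes d: "d \<ge> 2"
  shows "RR d q (Suc k) = q^2 * (cc d k)^2 * RR d q k + (1 - q^2) * NS d (Suc k)"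
proof -
  let ?L = "LL d (Suc k)"
  have pt: "q ^ dl d u v = q^2 * q ^ dl d (par d u) (par d v) + (if u = v then 1 - q^2 else 0)"
    if "u \<in> ?L" "v \<in> ?L" for u v
  proof (cases "u = v")
    case True then show ?thesis by (simp add: dl_self)
  next
    case False then show ?thesis using P2[OF d that False] by (simp add: power_add power2_eq_square)
  qed
  have "RR d q (Suc k) = (\<Sum>v\<in>?L. \<Sum>u\<in>?L. q^2 * q ^ dl d (par d u) (par d v) + (if u = v then 1 - q^2 else 0))"
    unfolding RR_def by (intro sum.cong refl) (simp add: pt)
  also have "\<dots> = (\<Sum>v\<in>?L. q^2 * (\<Sum>u\<in>?L. q ^ dl d (par d u) (par d v)) + (1 - q^2))"
    by (intro sum.cong refl) (simp add: sum.distrib sum_distrib_left fin_LL)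
  also have "\<dots> = (\<Sum>v\<in>?L. q^2 * (cc d k * (\<Sum>x\<in>LL d k. q ^ dl d x (par d v))) + (1 - q^2))"
    using sum_par[OF d, of "\<lambda>x. q ^ dl d x (par d _)"] by simp
  also have "\<dots> = q^2 * cc d k * (\<Sum>v\<in>?L. (\<lambda>y. \<Sum>x\<in>LL d k. q ^ dl d x y) (par d v)) + real (card ?L) * (1 - q^2)"
    by (simp add: sum.distrib sum_distrib_left mult.assoc)
  also have "\<dots> = q^2 * cc d k * (cc d k * RR d q k) + real (card ?L) * (1 - q^2)"
    using sum_par[OF d, of "\<lambda>y. \<Sum>x\<in>LL d k. q ^ dl d x y" k] unfolding RR_def by simp
  finally show ?thesis using card_LL[OF d, of "Suc k"] by (simp add: power2_eq_square algebra_simps)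
qed

lemma AR_Suc: assumes d: "d \<ge> 2"
  shows "AR d q (Suc k) = q * cc d k * AR d q k + RR d q (Suc k)"
proof -
  let ?L = "LL d (Suc k)"
  have "AR d q (Suc k) = (\<Sum>v\<in>?L. (\<Sum>u\<in>TT d k. q ^ dl d u v) + (\<Sum>u\<in>?L. q ^ dl d u v))"
    unfolding AR_def TT_Suc[OF d]
    by (intro sum.cong refl sum.union_disjoint) (auto simp: fin_LL fin_TT TT_LL_disj)
  also have "\<dots> = (\<Sum>v\<in>?L. q * (\<lambda>y. \<Sum>u\<in>TT d k. q ^ dl d u y) (par d v)) + RR d q (Suc k)"
    unfolding RR_def sum.distrib
    by (simp add: sum_distrib_left P1[OF d] power_add mult.commute cong: sum.cong)
  also have "\<dots> = q * (\<Sum>v\<in>?L. (\<lambda>y. \<Sum>u\<in>TT d k. q ^ dl d u y) (par d v)) + RR d q (Suc k)"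
    by (simp add: sum_distrib_left)
  also have "\<dots> = q * (cc d k * AR d q k) + RR d q (Suc k)"
    using sum_par[OF d, of "\<lambda>y. \<Sum>u\<in>TT d k. q ^ dl d u y" k] unfolding AR_def by simp
  also have "\<dots> = q * cc d k * AR d q k + RR d q (Suc k)" by (simp add: mult.assoc)
  finally show ?thesis .
qed

lemma FR_Suc: assumes d: "d \<ge> 2"
  shows "FR d q (Suc k) = FR d q k + 2 * q * cc d k * AR d q k + RR d q (Suc k)"
proof -
  let ?L = "LL d (Suc k)" and ?T = "TT d k"
  have un: "(\<Sum>u\<in>?T \<union> ?L. f u) = (\<Sum>u\<in>?T. f u) + (\<Sum>u\<in>?L. f u)" for f :: "nat \<Rightarrow> real"
    by (rule sum.union_disjoint) (auto simp: fin_LL fin_TT TT_LL_disj)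
  have "FR d q (Suc k) = (\<Sum>v\<in>?T. \<Sum>u\<in>?T. q ^ dl d u v) + (\<Sum>v\<in>?T. \<Sum>u\<in>?L. q ^ dl d u v)
      + ((\<Sum>v\<in>?L. \<Sum>u\<in>?T. q ^ dl d u v) + (\<Sum>v\<in>?L. \<Sum>u\<in>?L. q ^ dl d u v))"
    unfolding FR_def TT_Suc[OF d] un sum.distrib by simp
  also have "(\<Sum>v\<in>?T. \<Sum>u\<in>?L. q ^ dl d u v) = (\<Sum>v\<in>?L. \<Sum>u\<in>?T. q ^ dl d u v)"
    by (subst sum.swap) (simp add: dl_sym[OF d])
  also have "(\<Sum>v\<in>?L. \<Sum>u\<in>?T. q ^ dl d u v) = AR d q (Suc k) - RR d q (Suc k)"
  proof -
    have "AR d q (Suc k) = (\<Sum>v\<in>?L. \<Sum>u\<in>?T. q ^ dl d u v) + RR d q (Suc k)"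
      unfolding AR_def RR_def TT_Suc[OF d] un sum.distrib ..
    then show ?thesis by simp
  qed
  finally show ?thesis unfolding AR_Suc[OF d] FR_def RR_def by simp
qed

lemma RR_RS: assumes d: "d \<ge> 2" shows "RR d q k = RS d q k"
proof (induction k)
  case 0 show ?case by (simp add: RR_def LL0 dl_self)
next
  case (Suc k) then show ?case by (simp add: RR_Suc[OF d])
qed

lemma AR_AS: assumes d: "d \<ge> 2" shows "AR d q k = AS d q k"
proof (induction k)
  case 0 show ?case by (simp add: AR_def LL0 TT0 dl_self)
next
  case (Suc k) then show ?case by (simp add: AR_Suc[OF d] RR_RS[OF d])
qed

lemma FR_FS: assumes d: "d \<ge> 2" shows "FR d q k = FS d q k"
proof (induction k)
  case 0 show ?case by (simp add: FR_def TT0 dl_self)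
next
  case (Suc k) then show ?case by (simp add: FR_Suc[OF d] RR_RS[OF d] AR_AS[OF d])
qed

lemma dend_W_ws: assumes d: "d \<ge> 2" shows "dend_W d (n_k d k - 1) q = ws d q k"
proof -
  define n where "n = mm d k - 1"
  have V: "{1..n} = TT d k" using mm_ge2[OF d, of k] unfolding n_def TT_def by auto
  have "dend_W d (n_k d k - 1) q = wiener_poly {1..n} (EE d n) q"
    unfolding dend_W_def n_k_mm[OF d] n_def dend_edges_EE[OF d] ..
  also have "\<dots> = ((\<Sum>v\<in>{1..n}. \<Sum>u\<in>{1..n}. q ^ dl d u v) - real (card {1..n})) / 2"
    by (rule wiener_EE[OF d])
  also have "\<dots> = (FR d q k - real (card (TT d k))) / 2"
    unfolding V FR_def ..
  also have "\<dots> = ws d q k" unfolding FR_FS[OF d] card_TT[OF d] ws_def ..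
  finally show ?thesis .
qed

theorem proposition4p1:
  fixes d :: nat and q :: real
  assumes "d \<ge> 2"
  shows "Abs_fps (\<lambda>k. if k = 0 then 0 else dend_W d (n_k d k - 1) q)
       = fps_X * (fps_const (real (d + 1) * q)
                  + fps_const (real ((d + 1) choose 2) * q ^ 2) * (1 + fps_X))
         / ((1 - fps_X) * (1 - fps_const (real d) * fps_X)
            * (1 - fps_const (real d ^ 2 * q ^ 2) * fps_X))"
  unfolding dend_W_ws[OF assms] by (rule fps_main)


end
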